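(* In the structural equation model of the context, for every fixed $\gamma\in\mathbb{R}^q$ and every subset $S\subseteq\{1,\dots,q\}$, the population regression coefficient satisfies $\hat\beta(S)=\beta+\mathbf{C}(S)\gamma$.
   Context: Structural equation model: fix integers $d,q,r\ge1$. Let $N_z\in\mathbb{R}^r$, $N_w\in\mathbb{R}^q$, $N_x\in\mathbb{R}^d$, $N_y\in\mathbb{R}$ be mutually independent zero-mean random vectors with $\operatorname{Cov}(N_z)=I_r$, $\operatorname{Cov}(N_w)=\operatorname{diag}(\sigma_{w,1}^2,\dots,\sigma_{w,q}^2)$ with all $\sigma_{w,i}^2>0$, $\operatorname{Cov}(N_x)=\mathbf{D}_x$ a positive definite diagonal matrix, $\operatorname{Var}(N_y)=\sigma_y^2$. With $\mathbf{A}\in\mathbb{R}^{q\times r}$, $\mathbf{B}\in\mathbb{R}^{d\times r}$, $\beta\in\mathbb{R}^d$, $\gamma\in\mathbb{R}^q$: $Z=N_z$, $W=\mathbf{A}Z+N_w$, $X=\mathbf{B}Z+N_x$, $Y=\beta^\top X+\gamma^\top W+N_y$. For $S\subseteq\{1,\dots,q\}$, $S^c$ is its complement, $W_S$ the subvector, $\mathbf{A}_S$ the rows of $\mathbf{A}$ indexed by $S$, $\mathbf{D}_S=\operatorname{diag}(\sigma_{w,i}^2)_{i\in S}$. $\hat\beta(S)=(I_d,\mathbf{0})\operatorname{Var}((X,W_S))^{-1}\operatorname{Cov}((X,W_S),Y)$. $\mathbf{C}(S)\in\mathbb{R}^{d\times q}$ has zero columns for indices in $S$, and its columns indexed by $S^c$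 form $\mathbf{D}_x^{-1}\mathbf{B}(I_r+\mathbf{B}^\top\mathbf{D}_x^{-1}\mathbf{B}+\mathbf{A}_S^\top\mathbf{D}_S^{-1}\mathbf{A}_S)^{-1}\mathbf{A}_{S^c}^\top$. *)

theory Defs
  imports "HOL-Probability.Probability" "Jordan_Normal_Form.DL_Submatrix"
begin

definition cov :: "'a measure \<Rightarrow> ('a \<Rightarrow> real) \<Rightarrow> ('a \<Rightarrow> real) \<Rightarrow> real" where
  "cov M U V = (\<integral>\<omega>. (U \<omega> - (\<integral>x. U x \<partial>M)) * (V \<omega> - (\<integral>x. V x \<partial>M)) \<partial>M)"

definition var_mat :: "'a measure \<Rightarrow> (nat \<Rightarrow> 'a \<Rightarrow> real) \<Rightarrow> nat \<Rightarrow> real mat" where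
  "var_mat M V n = mat n n (\<lambda>(i,j). cov M (V i) (V j))"

definition cov_vec :: "'a measure \<Rightarrow> (nat \<Rightarrow> 'a \<Rightarrow> real) \<Rightarrow> nat \<Rightarrow> ('a \<Rightarrow> real) \<Rightarrow> real vec" where
  "cov_vec M V n Y = vec n (\<lambda>i. cov M (V i) Y)"

definition inv_mat :: "real mat \<Rightarrow> real mat" where
  "inv_mat A = (SOME B. B \<in> carrier_mat (dim_row A) (dim_row A) \<and>
      A * B = 1\<^sub>m (dim_row A) \<and> B * A = 1\<^sub>m (dim_row A))"

text \<open>Indices are 0-based: components 0..r-1 of Z, 0..q-1 of W, 0..d-1 of X.\<close>

definition sem_W :: "real mat \<Rightarrow> (nat \<Rightarrow> 'a \<Rightarrow> real) \<Rightarrow> (nat \<Rightarrow> 'a \<Rightarrow> real) \<Rightarrow> nat \<Rightarrow> 'a \<Rightarrow> real" where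
  "sem_W A Nz Nw i \<omega> = (\<Sum>k<dim_col A. A $$ (i,k) * Nz k \<omega>) + Nw i \<omega>"

definition sem_X :: "real mat \<Rightarrow> (nat \<Rightarrow> 'a \<Rightarrow> real) \<Rightarrow> (nat \<Rightarrow> 'a \<Rightarrow> real) \<Rightarrow> nat \<Rightarrow> 'a \<Rightarrow> real" where
  "sem_X B Nz Nx i \<omega> = (\<Sum>k<dim_col B. B $$ (i,k) * Nz k \<omega>) + Nx i \<omega>"

definition sem_Y :: "real mat \<Rightarrow> real mat \<Rightarrow> real vec \<Rightarrow> real vec \<Rightarrow>
    (nat \<Rightarrow> 'a \<Rightarrow> real) \<Rightarrow> (nat \<Rightarrow> 'a \<Rightarrow> real) \<Rightarrow> (nat \<Rightarrow> 'a \<Rightarrow> real) \<Rightarrow> ('a \<Rightarrow> real) \<Rightarrow> 'a \<Rightarrow> real" where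
  "sem_Y A B \<beta> \<gamma> Nz Nw Nx Ny \<omega> =
     (\<Sum>i<dim_vec \<beta>. \<beta> $ i * sem_X B Nz Nx i \<omega>) + (\<Sum>i<dim_vec \<gamma>. \<gamma> $ i * sem_W A Nz Nw i \<omega>) + Ny \<omega>"

text \<open>The regressor vector (X, W_S) of length d + |S|; W_S lists the components of W
  indexed by S in increasing order (pick S j is the j-th smallest element of S).\<close>
definition regressors :: "nat \<Rightarrow> nat set \<Rightarrow> (nat \<Rightarrow> 'a \<Rightarrow> real) \<Rightarrow> (nat \<Rightarrow> 'a \<Rightarrow> real) \<Rightarrow> nat \<Rightarrow> 'a \<Rightarrow> real" where
  "regressors d S X W j = (if j < d then X j else W (pick S (j - d)))"

definition beta_hat :: "'a measure \<Rightarrow> nat \<Rightarrow> nat set \<Rightarrow> (nat \<Rightarrow> 'a \<Rightarrow> real) \<Rightarrow> (nat \<Rightarrow> 'a \<Rightarrow> real) \<Rightarrow> ('a \<Rightarrow> real) \<Rightarrow> real vec" where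
  "beta_hat M d S X W Y =
     (let n = d + card S; V = regressors d S X W
      in mat d n (\<lambda>(i,j). if i = j then 1 else 0) * inv_mat (var_mat M V n) *\<^sub>v cov_vec M V n Y)"

text \<open>The matrix C(S) (d x q): zero columns for indices in S; the columns indexed by
  S^c (in increasing order) form
  D_x^{-1} B (I_r + B^T D_x^{-1} B + A_S^T D_S^{-1} A_S)^{-1} A_{S^c}^T.\<close>
definition C_mat :: "nat \<Rightarrow> (nat \<Rightarrow> real) \<Rightarrow> real mat \<Rightarrow> real mat \<Rightarrow> real mat \<Rightarrow> nat set \<Rightarrow> real mat" where
  "C_mat q sw Dx A B S =
     (let r = dim_col A; d = dim_row B; Sc = {0..<q} - S;
          AS = submatrix A S UNIV; ASc = submatrix A Sc UNIV;
          DS = mat (card S) (card S) (\<lambda>(i,j). if i = j then sw (pick S i) else 0);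
          K = 1\<^sub>m r + transpose_mat B * inv_mat Dx * B + transpose_mat AS * inv_mat DS * AS;
          G = inv_mat Dx * B * inv_mat K * transpose_mat ASc
      in mat d q (\<lambda>(i,j). if j \<in> S then 0 else G $$ (i, card {a \<in> Sc. a < j})))"

text \<open>The four independent noise vectors as blocks 0 (N_z), 1 (N_w), 2 (N_x), 3 (N_y).\<close>
definition noise_block :: "(nat \<Rightarrow> 'a \<Rightarrow> real) \<Rightarrow> (nat \<Rightarrow> 'a \<Rightarrow> real) \<Rightarrow> (nat \<Rightarrow> 'a \<Rightarrow> real) \<Rightarrow> ('a \<Rightarrow> real) \<Rightarrow> nat \<Rightarrow> nat \<Rightarrow> 'a \<Rightarrow> real" where
  "noise_block Nz Nw Nx Ny k = (case k of 0 \<Rightarrow> Nz | Suc 0 \<Rightarrow> Nw | Suc (Suc 0) \<Rightarrow> Nx | _ \<Rightarrow> (\<lambda>_. Ny))"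

definition block_dim :: "nat \<Rightarrow> nat \<Rightarrow> nat \<Rightarrow> nat \<Rightarrow> nat" where
  "block_dim r q d k = (case k of 0 \<Rightarrow> r | Suc 0 \<Rightarrow> q | Suc (Suc 0) \<Rightarrow> d | _ \<Rightarrow> 1)"

end

theory Submission
  imports Defs "Jordan_Normal_Form.Determinant"
begin

locale semP = prob_space M
  for M :: "'a measure" and d q r :: nat
    and Nz Nw Nx :: "nat \<Rightarrow> 'a \<Rightarrow> real" and Ny :: "'a \<Rightarrow> real"
    and sw :: "nat \<Rightarrow> real" and Dx :: "real mat" and sy :: real +
  assumes indep: "indep_vars (\<lambda>k. PiM {..<block_dim r q d k} (\<lambda>_. borel))
                 (\<lambda>k \<omega>. restrict (\<lambda>i. noise_block Nz Nw Nx Ny k i \<omega>) {..<block_dim r q d k}) {0..<4}"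
    and Nz: "\<And>i. i < r \<Longrightarrow> Nz i \<in> borel_measurable M \<and> integrable M (\<lambda>\<omega>. (Nz i \<omega>)\<^sup>2)"
    and Nw: "\<And>i. i < q \<Longrightarrow> Nw i \<in> borel_measurable M \<and> integrable M (\<lambda>\<omega>. (Nw i \<omega>)\<^sup>2)"
    and Nx: "\<And>i. i < d \<Longrightarrow> Nx i \<in> borel_measurable M \<and> integrable M (\<lambda>\<omega>. (Nx i \<omega>)\<^sup>2)"
    and Ny: "Ny \<in> borel_measurable M" "integrable M (\<lambda>\<omega>. (Ny \<omega>)\<^sup>2)"
    and Ez: "\<And>i. i < r \<Longrightarrow> (\<integral>\<omega>. Nz i \<omega> \<partial>M) = 0"
    and Ew: "\<And>i. i < q \<Longrightarrow> (\<integral>\<omega>. Nw i \<omega> \<partial>M) = 0"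
    and Ex: "\<And>i. i < d \<Longrightarrow> (\<integral>\<omega>. Nx i \<omega> \<partial>M) = 0"
    and Ey: "(\<integral>\<omega>. Ny \<omega> \<partial>M) = 0"
    and Cz: "\<And>i j. i < r \<Longrightarrow> j < r \<Longrightarrow> cov M (Nz i) (Nz j) = (if i = j then 1 else 0)"
    and Cw: "\<And>i j. i < q \<Longrightarrow> j < q \<Longrightarrow> cov M (Nw i) (Nw j) = (if i = j then sw i else 0)"
    and Dxc: "Dx \<in> carrier_mat d d" "diagonal_mat Dx"
    and Cx: "\<And>i j. i < d \<Longrightarrow> j < d \<Longrightarrow> cov M (Nx i) (Nx j) = Dx $$ (i, j)"
    and Cy: "cov M Ny Ny = sy"
begin

abbreviation "nb \<equiv> noise_block Nz Nw Nx Ny"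
abbreviation "bd \<equiv> block_dim r q d"

definition sig :: "nat \<Rightarrow> nat \<Rightarrow> real" where
  "sig k i = (if k = 0 then 1 else if k = 1 then sw i else if k = 2 then Dx $$ (i,i) else sy)"

lemma k4: "k < (4::nat) \<Longrightarrow> k = 0 \<or> k = 1 \<or> k = 2 \<or> k = 3" by auto

lemma nb_simps: "nb 0 = Nz" "nb 1 = Nw" "nb 2 = Nx" "nb 3 = (\<lambda>_. Ny)"
  "bd 0 = r" "bd 1 = q" "bd 2 = d" "bd 3 = 1"
  by (simp_all add: noise_block_def block_dim_def numeral_eq_Suc)

lemma nb_simps2: "nb (Suc 0) = Nw" "nb (Suc (Suc 0)) = Nx" "nb (Suc (Suc (Suc 0))) = (\<lambda>_. Ny)"
  "bd (Suc 0) = q" "bd (Suc (Suc 0)) = d" "bd (Suc (Suc (Suc 0))) = 1"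
  by (simp_all add: noise_block_def block_dim_def)

lemma nb_basic:
  assumes "k < 4" "i < bd k"
  shows "nb k i \<in> borel_measurable M" "integrable M (\<lambda>\<omega>. (nb k i \<omega>)\<^sup>2)"
    "(\<integral>\<omega>. nb k i \<omega> \<partial>M) = 0"
  using k4[OF assms(1)] assms(2) Nz Nw Nx Ny Ez Ew Ex Ey by (auto simp: nb_simps nb_simps2)

lemma nb_int: assumes "k < 4" "i < bd k" shows "integrable M (nb k i)"
  using square_integrable_imp_integrable[OF nb_basic(1,2)[OF assms]] .

lemma nb_prod_int:
  assumes "k < 4" "i < bd k" "l < 4" "j < bd l"
  shows "integrable M (\<lambda>\<omega>. nb k i \<omega> * nb l j \<omega>)"
proof (rule Bochner_Integration.integrable_bound)
  show "integrable M (\<lambda>\<omega>. (nb k i \<omega>)\<^sup>2 + (nb l j \<omega>)\<^sup>2)"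
    using nb_basic(2)[OF assms(1,2)] nb_basic(2)[OF assms(3,4)] by simp
  show "(\<lambda>\<omega>. nb k i \<omega> * nb l j \<omega>) \<in> borel_measurable M"
    using nb_basic(1)[OF assms(1,2)] nb_basic(1)[OF assms(3,4)] by measurable
  show "AE x in M. norm (nb k i x * nb l j x) \<le> norm ((nb k i x)\<^sup>2 + (nb l j x)\<^sup>2)"
  proof (rule AE_I2)
    fix x
    have ab: "\<bar>a * b\<bar> \<le> a\<^sup>2 + b\<^sup>2" for a b :: real
    proof -
      have "0 \<le> (\<bar>a\<bar> - \<bar>b\<bar>)\<^sup>2" by simp
      hence "2 * \<bar>a\<bar> * \<bar>b\<bar> \<le> a\<^sup>2 + b\<^sup>2"
        by (simp add: power2_eq_square algebra_simps abs_mult_self_eq)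
      moreover have "0 \<le> \<bar>a\<bar> * \<bar>b\<bar>" by simp
      ultimately show ?thesis unfolding abs_mult by linarith
    qed
    have "\<bar>nb k i x * nb l j x\<bar> \<le> (nb k i x)\<^sup>2 + (nb l j x)\<^sup>2" by (rule ab)
    thus "norm (nb k i x * nb l j x) \<le> norm ((nb k i x)\<^sup>2 + (nb l j x)\<^sup>2)" by simp
  qed
qed

lemma nb_indep:
  assumes "k < 4" "l < 4" "k \<noteq> l" "i < bd k" "j < bd l"
  shows "indep_var borel (nb k i) borel (nb l j)"
proof -
  let ?M' = "\<lambda>k. PiM {..<bd k} (\<lambda>_. borel)"
  let ?X = "\<lambda>k \<omega>. restrict (\<lambda>i. nb k i \<omega>) {..<bd k}"
  have iv: "indep_var (PiM {k} ?M') (\<lambda>\<omega>. restrict (\<lambda>k. ?X k \<omega>) {k})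
      (PiM {l} ?M') (\<lambda>\<omega>. restrict (\<lambda>k. ?X k \<omega>) {l})"
    by (rule indep_var_restrict[OF indep]) (use assms in auto)
  have m1: "(\<lambda>f. f k i) \<in> measurable (PiM {k} ?M') borel"
  proof -
    have "(\<lambda>f. f k) \<in> measurable (PiM {k} ?M') (?M' k)"
      by (rule measurable_component_singleton) simp
    moreover have "(\<lambda>x. x i) \<in> measurable (?M' k) borel"
      using assms by (intro measurable_component_singleton) simp
    ultimately show ?thesis by (rule measurable_compose)
  qed
  have m2: "(\<lambda>f. f l j) \<in> measurable (PiM {l} ?M') borel"
  proof -
    have "(\<lambda>f. f l) \<in> measurable (PiM {l} ?M') (?M' l)"
      by (rule measurable_component_singleton) simp
    moreover have "(\<lambda>x. x j) \<in> measurable (?M' l) borel"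
      using assms by (intro measurable_component_singleton) simp
    ultimately show ?thesis by (rule measurable_compose)
  qed
  have "indep_var borel ((\<lambda>f. f k i) \<circ> (\<lambda>\<omega>. restrict (\<lambda>k. ?X k \<omega>) {k}))
     borel ((\<lambda>f. f l j) \<circ> (\<lambda>\<omega>. restrict (\<lambda>k. ?X k \<omega>) {l}))"
    by (rule indep_var_compose[OF iv m1 m2])
  moreover have "((\<lambda>f. f k i) \<circ> (\<lambda>\<omega>. restrict (\<lambda>k. ?X k \<omega>) {k})) = nb k i"
    using assms by (auto simp: fun_eq_iff)
  moreover have "((\<lambda>f. f l j) \<circ> (\<lambda>\<omega>. restrict (\<lambda>k. ?X k \<omega>) {l})) = nb l j"
    using assms by (auto simp: fun_eq_iff)
  ultimately show ?thesis by simp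
qed

lemma cov0: assumes "(\<integral>\<omega>. U \<omega> \<partial>M) = 0" "(\<integral>\<omega>. V \<omega> \<partial>M) = 0"
  shows "cov M U V = (\<integral>\<omega>. U \<omega> * V \<omega> \<partial>M)"
  using assms by (simp add: cov_def)

lemma diagDx: "i < d \<Longrightarrow> j < d \<Longrightarrow> i \<noteq> j \<Longrightarrow> Dx $$ (i,j) = 0"
  using Dxc unfolding diagonal_mat_def by auto

lemma nb_E2:
  assumes "k < 4" "i < bd k" "l < 4" "j < bd l"
  shows "(\<integral>\<omega>. nb k i \<omega> * nb l j \<omega> \<partial>M) = (if k = l \<and> i = j then sig k i else 0)"
proof (cases "k = l")
  case False
  then show ?thesis
    using indep_var_lebesgue_integral[OF nb_indep[OF assms(1,3) False assms(2,4)]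
        nb_int[OF assms(1,2)] nb_int[OF assms(3,4)]] nb_basic(3)[OF assms(1,2)] by simp
next
  case True
  have "(\<integral>\<omega>. nb k i \<omega> * nb l j \<omega> \<partial>M) = cov M (nb k i) (nb l j)"
    using cov0 nb_basic(3) assms by simp
  also have "\<dots> = (if k = l \<and> i = j then sig k i else 0)"
    using k4[OF assms(1)] True assms Cz Cw Cx Cy diagDx
    by (auto simp: nb_simps nb_simps2 sig_def)
  finally show ?thesis .
qed

definition Idx :: "(nat \<times> nat) set" where "Idx = {(k,i). k < 4 \<and> i < bd k}"

lemma Idx_eq: "Idx = (Pair 0 ` {..<r}) \<union> (Pair 1 ` {..<q}) \<union> (Pair 2 ` {..<d}) \<union> {(3,0)}"
proof -
  have "(k,i) \<in> Idx \<longleftrightarrow> (k,i) \<in> (Pair 0 ` {..<r}) \<union> (Pair 1 ` {..<q}) \<union> (Pair 2 ` {..<d}) \<union> {(3,0)}" for k i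
  proof
    assume "(k,i) \<in> Idx" thus "(k,i) \<in> (Pair 0 ` {..<r}) \<union> (Pair 1 ` {..<q}) \<union> (Pair 2 ` {..<d}) \<union> {(3,0)}"
      unfolding Idx_def using k4[of k] by (auto simp: nb_simps nb_simps2)
  next
    assume "(k,i) \<in> (Pair 0 ` {..<r}) \<union> (Pair 1 ` {..<q}) \<union> (Pair 2 ` {..<d}) \<union> {(3,0)}"
    thus "(k,i) \<in> Idx" unfolding Idx_def by (auto simp: nb_simps nb_simps2)
  qed
  thus ?thesis by auto
qed

lemma finite_Idx: "finite Idx" unfolding Idx_eq by auto

lemma sum_Idx: "(\<Sum>p\<in>Idx. f p) = (\<Sum>k<r. f (0,k)) + (\<Sum>i<q. f (1,i)) + (\<Sum>i<d. f (2,i)) + f (3,0)"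
  unfolding Idx_eq
  by (subst sum.union_disjoint, force, force, force)+
     (auto simp: sum.reindex inj_on_def)

lemma Idx_mem: "p \<in> Idx \<Longrightarrow> fst p < 4 \<and> snd p < bd (fst p)"
  unfolding Idx_def by auto

definition lin :: "(nat \<times> nat \<Rightarrow> real) \<Rightarrow> 'a \<Rightarrow> real" where
  "lin c \<omega> = (\<Sum>p\<in>Idx. c p * nb (fst p) (snd p) \<omega>)"

lemma cov_lin: "cov M (lin c) (lin c') = (\<Sum>p\<in>Idx. c p * c' p * sig (fst p) (snd p))"
proof -
  have I1: "integrable M (\<lambda>\<omega>. c p * nb (fst p) (snd p) \<omega>)" if "p \<in> Idx" for p c
    using nb_int Idx_mem[OF that] by auto
  have E: "(\<integral>\<omega>. lin c \<omega> \<partial>M) = 0" for c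
    unfolding lin_def
    by (subst Bochner_Integration.integral_sum) (use I1 nb_basic(3) Idx_mem in auto)
  have I2: "integrable M (\<lambda>\<omega>. c p * c' p' * (nb (fst p) (snd p) \<omega> * nb (fst p') (snd p') \<omega>))"
    if "p \<in> Idx" "p' \<in> Idx" for p p'
    using nb_prod_int Idx_mem[OF that(1)] Idx_mem[OF that(2)] by auto
  have "cov M (lin c) (lin c') = (\<integral>\<omega>. lin c \<omega> * lin c' \<omega> \<partial>M)"
    using cov0 E by simp
  also have "\<dots> = (\<integral>\<omega>. (\<Sum>p\<in>Idx. \<Sum>p'\<in>Idx. c p * c' p' * (nb (fst p) (snd p) \<omega> * nb (fst p') (snd p') \<omega>)) \<partial>M)"
    unfolding lin_def sum_product by (simp add: algebra_simps)
  also have "\<dots> = (\<Sum>p\<in>Idx. \<Sum>p'\<in>Idx. c p * c' p' * (\<integral>\<omega>. nb (fst p) (snd p) \<omega> * nb (fst p') (snd p') \<omega> \<partial>M))"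
    using I2 by (simp add: Bochner_Integration.integral_sum)
  also have "\<dots> = (\<Sum>p\<in>Idx. \<Sum>p'\<in>Idx. c p * c' p' * (if p = p' then sig (fst p) (snd p) else 0))"
    by (intro sum.cong refl, subst nb_E2) (auto dest!: Idx_mem simp: prod_eq_iff)
  also have "\<dots> = (\<Sum>p\<in>Idx. c p * c' p * sig (fst p) (snd p))"
    by (simp add: if_distrib finite_Idx cong: if_cong)
  finally show ?thesis .
qed

definition lin4 :: "(nat \<Rightarrow> real) \<Rightarrow> (nat \<Rightarrow> real) \<Rightarrow> (nat \<Rightarrow> real) \<Rightarrow> real \<Rightarrow> 'a \<Rightarrow> real" where
  "lin4 cz cw cx cy = lin (\<lambda>(k,i). if k = 0 then cz i else if k = 1 then cw i else if k = 2 then cx i else cy)"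

lemma lin4_eq: "lin4 cz cw cx cy \<omega> = (\<Sum>k<r. cz k * Nz k \<omega>) + (\<Sum>i<q. cw i * Nw i \<omega>) + (\<Sum>i<d. cx i * Nx i \<omega>) + cy * Ny \<omega>"
  unfolding lin4_def lin_def sum_Idx by (simp add: nb_simps nb_simps2)

lemma cov_lin4: "cov M (lin4 cz cw cx cy) (lin4 cz' cw' cx' cy') =
   (\<Sum>k<r. cz k * cz' k) + (\<Sum>i<q. cw i * cw' i * sw i) + (\<Sum>i<d. cx i * cx' i * Dx $$ (i,i)) + cy * cy' * sy"
  unfolding lin4_def cov_lin sum_Idx by (simp add: sig_def)

end

lemma inv_mat_spec:
  assumes A: "A \<in> carrier_mat n n" and Bm: "Bm \<in> carrier_mat n n"
    and AB: "A * Bm = 1\<^sub>m n" and BA: "Bm * A = 1\<^sub>m n"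
  shows "inv_mat A = Bm"
proof -
  let ?P = "\<lambda>B. B \<in> carrier_mat (dim_row A) (dim_row A) \<and> A * B = 1\<^sub>m (dim_row A) \<and> B * A = 1\<^sub>m (dim_row A)"
  have "?P Bm" using A Bm AB BA by auto
  hence P: "?P (inv_mat A)" unfolding inv_mat_def by (rule someI)
  hence C: "inv_mat A \<in> carrier_mat n n" "inv_mat A * A = 1\<^sub>m n" using A by auto
  have "inv_mat A = inv_mat A * (A * Bm)" unfolding AB using C by simp
  also have "\<dots> = (inv_mat A * A) * Bm" by (rule assoc_mult_mat[symmetric, OF C(1) A Bm])
  also have "\<dots> = Bm" using C Bm by simp
  finally show ?thesis .
qed

lemma inv_mat_exists:
  assumes A: "A \<in> carrier_mat n n"
    and inj: "\<And>v. v \<in> carrier_vec n \<Longrightarrow> A *\<^sub>v v = 0\<^sub>v n \<Longrightarrow> v = 0\<^sub>v n"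
  shows "inv_mat A \<in> carrier_mat n n \<and> A * inv_mat A = 1\<^sub>m n \<and> inv_mat A * A = 1\<^sub>m n"
proof -
  have "Determinant.det A \<noteq> 0" using det_0_iff_vec_prod_zero[OF A] inj by blast
  from det_non_zero_imp_unit[OF A this, unfolded Units_def, of "()"]
  obtain Bm where "Bm \<in> carrier_mat n n" "A * Bm = 1\<^sub>m n" "Bm * A = 1\<^sub>m n"
    by (auto simp: ring_mat_def)
  thus ?thesis using inv_mat_spec[OF A] by auto
qed

lemma sum_delta_mult: "i < (N::nat) \<Longrightarrow> (\<Sum>j<N. (if j = i then 1 else 0) * f j) = (f i :: real)"
proof -
  assume "i < N"
  have "(\<Sum>j<N. (if j = i then 1 else 0) * f j) = (\<Sum>j<N. if j = i then f j else 0)"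
    by (rule sum.cong) auto
  thus ?thesis using \<open>i < N\<close> by (simp add: sum.delta)
qed

lemma sum_delta_mult2: "i < (N::nat) \<Longrightarrow> (\<Sum>j<N. (if j = i then 1 else 0) * c j * g j) = (c i * g i :: real)"
  using sum_delta_mult[of i N "\<lambda>j. c j * g j"] by (simp add: mult.assoc)

lemma sum_delta_delta: "a < (N::nat) \<Longrightarrow> (\<Sum>l<N. (if l = a then 1 else 0) * (if l = b then 1 else 0) * g l) = (if a = b then g a else 0 :: real)"
proof -
  assume a: "a < N"
  have "(\<Sum>l<N. (if l = a then 1 else 0) * (if l = b then 1 else 0) * g l) = (\<Sum>l<N. if l = a then (if a = b then g a else 0) else 0)"
    by (rule sum.cong) auto
  thus ?thesis using a by (simp add: sum.delta)
qed

lemma sum_split_add: "(\<Sum>m<(d::nat)+s. f m) = (\<Sum>m<d. f m) + (\<Sum>m<s. f (d+m))"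
  by (induct s) (auto simp: add.assoc)

lemma pick_bij: assumes T: "finite T" shows "bij_betw (pick T) {..<card T} T"
proof (rule bij_betw_imageI)
  show "inj_on (pick T) {..<card T}"
  proof (rule inj_onI)
    fix a b assume a: "a \<in> {..<card T}" and b: "b \<in> {..<card T}" and e: "pick T a = pick T b"
    have "card {x\<in>T. x < pick T a} = a" by (rule card_pick_le) (use a in auto)
    moreover have "card {x\<in>T. x < pick T b} = b" by (rule card_pick_le) (use b in auto)
    ultimately show "a = b" using e by metis
  qed
  show "pick T ` {..<card T} = T"
  proof
    show "pick T ` {..<card T} \<subseteq> T"
    proof
      fix x assume "x \<in> pick T ` {..<card T}"
      then obtain m where m: "m < card T" "x = pick T m" by blast
      show "x \<in> T" unfolding m(2) by (rule pick_in_set_le[OF m(1)])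
    qed
    show "T \<subseteq> pick T ` {..<card T}"
    proof
      fix j assume j: "j \<in> T"
      have "{x\<in>T. x < j} \<subset> T" using j by blast
      hence c: "card {x\<in>T. x < j} < card T" using T by (rule psubset_card_mono[rotated])
      have p: "pick T (card {x\<in>T. x < j}) = j" using pick_card_in_set[OF j] .
      show "j \<in> pick T ` {..<card T}"
        by (rule image_eqI[where x = "card {x\<in>T. x < j}"]) (use p c in simp_all)
    qed
  qed
qed

lemma sum_pick: "finite T \<Longrightarrow> (\<Sum>m<card T. f (pick T m)) = (\<Sum>j\<in>T. f j)"
  using sum.reindex_bij_betw[OF pick_bij, of T f] by simp

definition diag_mat :: "nat \<Rightarrow> (nat \<Rightarrow> real) \<Rightarrow> real mat" where
  "diag_mat N f = mat N N (\<lambda>(i,j). if i = j then f i else 0)"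

lemma diag_mat_carrier[simp]: "diag_mat N f \<in> carrier_mat N N"
  unfolding diag_mat_def by simp

lemma diag_mult_vec: "v \<in> carrier_vec N \<Longrightarrow> diag_mat N f *\<^sub>v v = vec N (\<lambda>i. f i * v $ i)"
proof (rule eq_vecI)
  fix i assume v: "v \<in> carrier_vec N" and i: "i < dim_vec (vec N (\<lambda>i. f i * v $ i))"
  hence "(diag_mat N f *\<^sub>v v) $ i = (\<Sum>j<N. (if i = j then f i else 0) * v $ j)"
    unfolding diag_mat_def by (simp add: scalar_prod_def lessThan_atLeast0)
  also have "\<dots> = (\<Sum>j<N. if j = i then f i * v $ j else 0)" by (rule sum.cong) auto
  also have "\<dots> = f i * v $ i" using i by (simp add: sum.delta)
  finally show "(diag_mat N f *\<^sub>v v) $ i = vec N (\<lambda>i. f i * v $ i) $ i" using i by simp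
qed (auto simp: diag_mat_def)

lemma diag_mult_diag: "diag_mat N f * diag_mat N g = diag_mat N (\<lambda>i. f i * g i)"
proof (rule eq_matI)
  fix i j assume i: "i < dim_row (diag_mat N (\<lambda>i. f i * g i))" and j: "j < dim_col (diag_mat N (\<lambda>i. f i * g i))"
  hence ij: "i < N" "j < N" unfolding diag_mat_def by auto
  hence "(diag_mat N f * diag_mat N g) $$ (i,j) = (\<Sum>k<N. (if i = k then f i else 0) * (if k = j then g k else 0))"
    unfolding diag_mat_def by (simp add: scalar_prod_def lessThan_atLeast0)
  also have "\<dots> = (\<Sum>k<N. if k = i then (if i = j then f i * g i else 0) else 0)" by (rule sum.cong) auto
  also have "\<dots> = diag_mat N (\<lambda>i. f i * g i) $$ (i,j)" using ij by (simp add: sum.delta diag_mat_def)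
  finally show "(diag_mat N f * diag_mat N g) $$ (i,j) = diag_mat N (\<lambda>i. f i * g i) $$ (i,j)" .
qed (auto simp: diag_mat_def)

lemma diag_one: "(\<And>i. i < N \<Longrightarrow> f i = 1) \<Longrightarrow> diag_mat N f = 1\<^sub>m N"
  by (rule eq_matI) (auto simp: diag_mat_def)

lemma inv_diag: assumes "\<And>i. i < N \<Longrightarrow> f i \<noteq> 0"
  shows "inv_mat (diag_mat N f) = diag_mat N (\<lambda>i. 1 / f i)"
proof (rule inv_mat_spec[of _ N])
  show "diag_mat N f * diag_mat N (\<lambda>i. 1 / f i) = 1\<^sub>m N"
    unfolding diag_mult_diag by (rule diag_one) (simp add: assms)
  show "diag_mat N (\<lambda>i. 1 / f i) * diag_mat N f = 1\<^sub>m N"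
    unfolding diag_mult_diag by (rule diag_one) (simp add: assms)
qed simp_all

lemma wsum_nonneg: fixes v :: "real Matrix.vec" shows "(\<And>i. i < N \<Longrightarrow> c i \<ge> 0) \<Longrightarrow> 0 \<le> (\<Sum>i<N. c i * (v $ i * v $ i))"
  by (intro sum_nonneg) simp

lemma wsum_zero: fixes v :: "real Matrix.vec" assumes v: "v \<in> carrier_vec N" and c: "\<And>i. i < N \<Longrightarrow> c i > 0"
  and z: "(\<Sum>i<N. c i * (v $ i * v $ i :: real)) = 0"
  shows "v = 0\<^sub>v N"
proof (rule eq_vecI)
  have nn: "\<forall>i\<in>{..<N}. 0 \<le> c i * (v $ i * v $ i)"
  proof
    fix i assume "i \<in> {..<N}"
    hence "0 < c i" using c by simp
    thus "0 \<le> c i * (v $ i * v $ i)" using mult_nonneg_nonneg[of "c i" "v $ i * v $ i"] by simp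
  qed
  have all0: "\<forall>i\<in>{..<N}. c i * (v $ i * v $ i) = 0"
  proof -
    have "(\<Sum>i<N. c i * (v $ i * v $ i)) = 0 \<longleftrightarrow> (\<forall>i\<in>{..<N}. c i * (v $ i * v $ i) = 0)"
      by (rule sum_nonneg_eq_0_iff) (use nn in auto)
    thus ?thesis using z by blast
  qed
  fix i assume "i < dim_vec (0\<^sub>v N)"
  hence i: "i < N" by simp
  have "c i * (v $ i * v $ i) = 0" using all0 i by simp
  moreover have "c i > 0" using c i by simp
  ultimately have "v $ i * v $ i = 0" by simp
  thus "v $ i = 0\<^sub>v N $ i" using i by simp
qed (use v in simp)

lemma diag_quad: "v \<in> carrier_vec N \<Longrightarrow> v \<bullet> (diag_mat N f *\<^sub>v v) = (\<Sum>i<N. f i * (v $ i * v $ i))"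
  by (simp add: diag_mult_vec scalar_prod_def lessThan_atLeast0 algebra_simps)

lemma self_quad: "v \<in> carrier_vec N \<Longrightarrow> v \<bullet> v = (\<Sum>i<N. 1 * (v $ i * v $ i :: real))"
  by (simp add: scalar_prod_def lessThan_atLeast0)

lemma self_nonneg: "v \<in> carrier_vec N \<Longrightarrow> 0 \<le> v \<bullet> (v :: real vec)"
  using self_quad[of v N] wsum_nonneg[of N "\<lambda>_. 1" v] by simp

locale semF = semP +
  fixes A B :: "real mat" and \<beta> \<gamma> :: "real vec" and S :: "nat set"
  assumes A: "A \<in> carrier_mat q r" and B: "B \<in> carrier_mat d r"
    and \<beta>: "\<beta> \<in> carrier_vec d" and \<gamma>: "\<gamma> \<in> carrier_vec q"
    and swpos: "\<And>i. i < q \<Longrightarrow> sw i > 0"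
    and Dx_pd: "\<And>v. v \<in> carrier_vec d \<Longrightarrow> v \<noteq> 0\<^sub>v d \<Longrightarrow> v \<bullet> (Dx *\<^sub>v v) > 0"
    and S: "S \<subseteq> {0..<q}"
begin

abbreviation "s \<equiv> card S"
abbreviation "n \<equiv> d + s"
abbreviation "X \<equiv> sem_X B Nz Nx"
abbreviation "W \<equiv> sem_W A Nz Nw"
abbreviation "Y \<equiv> sem_Y A B \<beta> \<gamma> Nz Nw Nx Ny"
abbreviation "V \<equiv> regressors d S X W"
definition "pk m = pick S (m - d)"
definition "Lm m k = (if m < d then B $$ (m,k) else A $$ (pk m, k))"
definition "Dd m = (if m < d then Dx $$ (m,m) else sw (pk m))"
definition "w0 m = (if m < d then \<beta> $ m else \<gamma> $ (pk m))"
definition "gg k = (\<Sum>i<d. \<beta> $ i * B $$ (i,k)) + (\<Sum>j<q. \<gamma> $ j * A $$ (j,k))"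

lemma finS: "finite S" using S finite_subset by blast

lemma pk_S: "d \<le> m \<Longrightarrow> m < n \<Longrightarrow> pk m \<in> S"
  unfolding pk_def by (intro pick_in_set_le) auto

lemma pk_q: assumes "d \<le> m" "m < n" shows "pk m < q"
proof -
  have "pk m \<in> S" using pk_S assms by blast
  thus ?thesis using S by auto
qed

lemma pk_inj: assumes "d \<le> m" "m < n" "d \<le> m'" "m' < n" "pk m = pk m'" shows "m = m'"
proof -
  have c1: "card {a\<in>S. a < pick S (m - d)} = m - d" by (rule card_pick_le) (use assms in auto)
  have c2: "card {a\<in>S. a < pick S (m' - d)} = m' - d" by (rule card_pick_le) (use assms in auto)
  have "m - d = m' - d" using c1 c2 assms(5) unfolding pk_def by metis
  thus ?thesis using assms by arith
qed

lemma Dx_diag_pos: "i < d \<Longrightarrow> Dx $$ (i,i) > 0"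
proof -
  assume i: "i < d"
  let ?e = "unit_vec d i :: real vec"
  have "?e \<bullet> (Dx *\<^sub>v ?e) > 0" using Dx_pd i by simp
  moreover have "?e \<bullet> (Dx *\<^sub>v ?e) = Dx $$ (i,i)" using Dxc i by simp
  ultimately show ?thesis by simp
qed

lemma Dd_pos: "m < n \<Longrightarrow> Dd m > 0"
proof -
  assume m: "m < n"
  show ?thesis
  proof (cases "m < d")
    case True thus ?thesis using Dx_diag_pos by (simp add: Dd_def)
  next
    case False thus ?thesis using swpos pk_q[of m] m by (simp add: Dd_def)
  qed
qed

lemma X_lin: "i < d \<Longrightarrow> X i = lin4 (\<lambda>k. B $$ (i,k)) (\<lambda>_. 0) (\<lambda>j. if j = i then 1 else 0) 0"
  unfolding fun_eq_iff lin4_eq sem_X_def using B by (simp add: sum_delta_mult)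

lemma W_lin: "j < q \<Longrightarrow> W j = lin4 (\<lambda>k. A $$ (j,k)) (\<lambda>l. if l = j then 1 else 0) (\<lambda>_. 0) 0"
  unfolding fun_eq_iff lin4_eq sem_W_def using A by (simp add: sum_delta_mult)

lemma Y_lin: "Y = lin4 gg (\<lambda>j. \<gamma> $ j) (\<lambda>i. \<beta> $ i) 1"
proof (rule ext)
  fix \<omega>
  have 1: "(\<Sum>i<d. \<beta> $ i * X i \<omega>) = (\<Sum>k<r. (\<Sum>i<d. \<beta> $ i * B $$ (i,k)) * Nz k \<omega>) + (\<Sum>i<d. \<beta> $ i * Nx i \<omega>)"
  proof -
    have "(\<Sum>i<d. \<beta> $ i * X i \<omega>) = (\<Sum>i<d. \<Sum>k<r. \<beta> $ i * B $$ (i,k) * Nz k \<omega>) + (\<Sum>i<d. \<beta> $ i * Nx i \<omega>)"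
      unfolding sem_X_def using B by (simp add: distrib_left sum.distrib sum_distrib_left mult.assoc)
    also have "(\<Sum>i<d. \<Sum>k<r. \<beta> $ i * B $$ (i,k) * Nz k \<omega>) = (\<Sum>k<r. \<Sum>i<d. \<beta> $ i * B $$ (i,k) * Nz k \<omega>)"
      by (rule sum.swap)
    also have "\<dots> = (\<Sum>k<r. (\<Sum>i<d. \<beta> $ i * B $$ (i,k)) * Nz k \<omega>)"
      by (simp add: sum_distrib_right)
    finally show ?thesis .
  qed
  have 2: "(\<Sum>j<q. \<gamma> $ j * W j \<omega>) = (\<Sum>k<r. (\<Sum>j<q. \<gamma> $ j * A $$ (j,k)) * Nz k \<omega>) + (\<Sum>j<q. \<gamma> $ j * Nw j \<omega>)"
  proof -
    have "(\<Sum>j<q. \<gamma> $ j * W j \<omega>) = (\<Sum>j<q. \<Sum>k<r. \<gamma> $ j * A $$ (j,k) * Nz k \<omega>) + (\<Sum>j<q. \<gamma> $ j * Nw j \<omega>)"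
      unfolding sem_W_def using A by (simp add: distrib_left sum.distrib sum_distrib_left mult.assoc)
    also have "(\<Sum>j<q. \<Sum>k<r. \<gamma> $ j * A $$ (j,k) * Nz k \<omega>) = (\<Sum>k<r. \<Sum>j<q. \<gamma> $ j * A $$ (j,k) * Nz k \<omega>)"
      by (rule sum.swap)
    also have "\<dots> = (\<Sum>k<r. (\<Sum>j<q. \<gamma> $ j * A $$ (j,k)) * Nz k \<omega>)"
      by (simp add: sum_distrib_right)
    finally show ?thesis .
  qed
  have "Y \<omega> = (\<Sum>i<d. \<beta> $ i * X i \<omega>) + (\<Sum>j<q. \<gamma> $ j * W j \<omega>) + Ny \<omega>"
    unfolding sem_Y_def using \<beta> \<gamma> by simp
  also have "\<dots> = lin4 gg (\<lambda>j. \<gamma> $ j) (\<lambda>i. \<beta> $ i) 1 \<omega>"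
    unfolding 1 2 lin4_eq gg_def by (simp add: distrib_right sum.distrib)
  finally show "Y \<omega> = lin4 gg (\<lambda>j. \<gamma> $ j) (\<lambda>i. \<beta> $ i) 1 \<omega>" .
qed

lemma V_lin: assumes m: "m < n"
  shows "V m = lin4 (\<lambda>k. Lm m k) (\<lambda>l. if m < d then 0 else if l = pk m then 1 else 0)
     (\<lambda>i. if m < d then (if i = m then 1 else 0) else 0) 0"
proof (cases "m < d")
  case True
  thus ?thesis unfolding regressors_def using X_lin[OF True] by (simp add: Lm_def)
next
  case False
  have "pk m < q" using pk_q False m by simp
  thus ?thesis unfolding regressors_def using W_lin[of "pk m"] False by (simp add: Lm_def pk_def)
qed

lemma cov_VV: assumes m: "m < n" and m': "m' < n"
  shows "cov M (V m) (V m') = (\<Sum>k<r. Lm m k * Lm m' k) + (if m = m' then Dd m else 0)"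
proof -
  have e: "cov M (V m) (V m') = (\<Sum>k<r. Lm m k * Lm m' k) +
     (\<Sum>l<q. (if m < d then 0 else if l = pk m then 1 else 0) * (if m' < d then 0 else if l = pk m' then 1 else 0) * sw l) +
     (\<Sum>i<d. (if m < d then (if i = m then 1 else 0) else 0) * (if m' < d then (if i = m' then 1 else 0) else 0) * Dx $$ (i,i))"
    unfolding V_lin[OF m] V_lin[OF m'] cov_lin4 by simp
  show ?thesis
  proof (cases "m < d")
    case True note mt = True
    show ?thesis
    proof (cases "m' < d")
      case True
      thus ?thesis using e mt sum_delta_delta[of m d m' "\<lambda>i. Dx $$ (i,i)"] by (simp add: Dd_def)
    next
      case False
      thus ?thesis using e mt by auto
    qed
  next
    case False note mf = False
    show ?thesis
    proof (cases "m' < d")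
      case True
      thus ?thesis using e mf by auto
    next
      case False
      have "pk m < q" using pk_q mf m by simp
      hence "cov M (V m) (V m') = (\<Sum>k<r. Lm m k * Lm m' k) + (if pk m = pk m' then sw (pk m) else 0)"
        using e mf False sum_delta_delta[of "pk m" q "pk m'" sw] by simp
      moreover have "pk m = pk m' \<longleftrightarrow> m = m'" using pk_inj[of m m'] mf False m m' by auto
      ultimately show ?thesis using mf by (simp add: Dd_def)
    qed
  qed
qed

lemma cov_VY: assumes m: "m < n"
  shows "cov M (V m) Y = (\<Sum>k<r. Lm m k * gg k) + Dd m * w0 m"
proof -
  have e: "cov M (V m) Y = (\<Sum>k<r. Lm m k * gg k) +
     (\<Sum>l<q. (if m < d then 0 else if l = pk m then 1 else 0) * \<gamma> $ l * sw l) +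
     (\<Sum>i<d. (if m < d then (if i = m then 1 else 0) else 0) * \<beta> $ i * Dx $$ (i,i))"
    unfolding V_lin[OF m] Y_lin cov_lin4 by simp
  show ?thesis
  proof (cases "m < d")
    case True
    thus ?thesis using e sum_delta_mult2[of m d "\<lambda>i. \<beta> $ i" "\<lambda>i. Dx $$ (i,i)"] by (simp add: Dd_def w0_def)
  next
    case False
    have "pk m < q" using pk_q False m by simp
    thus ?thesis using e False sum_delta_mult2[of "pk m" q "\<lambda>i. \<gamma> $ i" sw] by (simp add: Dd_def w0_def)
  qed
qed

definition "Lmat = mat n r (\<lambda>(m,k). Lm m k)"
definition "Dmat = diag_mat n Dd"
definition "Dinv = diag_mat n (\<lambda>m. 1 / Dd m)"
definition "Sig = Lmat * transpose_mat Lmat + Dmat"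
definition "w0v = vec n w0"
definition "ggv = vec r gg"
definition "Sc = {0..<q} - S"
definition "hv = vec r (\<lambda>k. \<Sum>j\<in>Sc. \<gamma> $ j * A $$ (j,k))"

lemma carriers[simp]: "Lmat \<in> carrier_mat n r" "Dmat \<in> carrier_mat n n" "Dinv \<in> carrier_mat n n"
  "Sig \<in> carrier_mat n n" "w0v \<in> carrier_vec n" "ggv \<in> carrier_vec r" "hv \<in> carrier_vec r"
  by (auto simp: Lmat_def Dmat_def Dinv_def Sig_def w0v_def ggv_def hv_def)

lemma dims[simp]: "dim_row Lmat = n" "dim_col Lmat = r" "dim_row Dmat = n" "dim_col Dmat = n"
  "dim_row Dinv = n" "dim_col Dinv = n" "dim_row Sig = n" "dim_col Sig = n"
  "dim_vec w0v = n" "dim_vec ggv = r" "dim_vec hv = r"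
  using carriers by (auto dest: carrier_matD carrier_vecD simp del: carriers)

lemma var_Sig: "var_mat M V n = Sig"
proof (rule eq_matI)
  fix i j assume "i < dim_row Sig" "j < dim_col Sig"
  hence ij: "i < n" "j < n" by auto
  show "var_mat M V n $$ (i, j) = Sig $$ (i, j)"
    using ij by (simp add: var_mat_def cov_VV Sig_def Lmat_def Dmat_def diag_mat_def scalar_prod_def lessThan_atLeast0)
qed (auto simp: var_mat_def)

lemma cov_c: "cov_vec M V n Y = Lmat *\<^sub>v ggv + Dmat *\<^sub>v w0v"
proof (rule eq_vecI)
  fix i assume "i < dim_vec (Lmat *\<^sub>v ggv + Dmat *\<^sub>v w0v)"
  hence i: "i < n" by simp
  have "(Dmat *\<^sub>v w0v) $ i = Dd i * w0 i" unfolding Dmat_def using i by (simp add: diag_mult_vec w0v_def)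
  thus "cov_vec M V n Y $ i = (Lmat *\<^sub>v ggv + Dmat *\<^sub>v w0v) $ i"
    using i by (simp add: cov_vec_def cov_VY Lmat_def ggv_def scalar_prod_def lessThan_atLeast0)
qed (simp add: cov_vec_def)

lemma sumS_Sc: "(\<Sum>j<q. f j) = (\<Sum>j\<in>S. f j) + (\<Sum>j\<in>Sc. f j)"
proof -
  have "(\<Sum>j<q. f j) = (\<Sum>j\<in>{0..<q}. f j)" by (simp add: lessThan_atLeast0)
  also have "\<dots> = (\<Sum>j\<in>{0..<q} - S. f j) + (\<Sum>j\<in>S. f j)"
    by (rule sum.subset_diff[OF S]) simp
  finally show ?thesis unfolding Sc_def by (simp add: add.commute)
qed

lemma gg_split: "ggv = transpose_mat Lmat *\<^sub>v w0v + hv"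
proof (rule eq_vecI)
  fix k assume "k < dim_vec (transpose_mat Lmat *\<^sub>v w0v + hv)"
  hence k: "k < r" by simp
  have "(transpose_mat Lmat *\<^sub>v w0v) $ k = (\<Sum>m<n. Lm m k * w0 m)"
    using k by (simp add: Lmat_def w0v_def scalar_prod_def lessThan_atLeast0)
  also have "\<dots> = (\<Sum>m<d. Lm m k * w0 m) + (\<Sum>m<s. Lm (d+m) k * w0 (d+m))"
    by (rule sum_split_add)
  also have "(\<Sum>m<s. Lm (d+m) k * w0 (d+m)) = (\<Sum>m<s. \<gamma> $ (pick S m) * A $$ (pick S m, k))"
    by (simp add: Lm_def w0_def pk_def mult.commute)
  also have "\<dots> = (\<Sum>j\<in>S. \<gamma> $ j * A $$ (j, k))"
    by (rule sum_pick[OF finS])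
  also have "(\<Sum>m<d. Lm m k * w0 m) = (\<Sum>i<d. \<beta> $ i * B $$ (i,k))"
    by (simp add: Lm_def w0_def mult.commute)
  finally have "(transpose_mat Lmat *\<^sub>v w0v) $ k = (\<Sum>i<d. \<beta> $ i * B $$ (i,k)) + (\<Sum>j\<in>S. \<gamma> $ j * A $$ (j, k))" .
  thus "ggv $ k = (transpose_mat Lmat *\<^sub>v w0v + hv) $ k"
    using k by (simp add: ggv_def gg_def hv_def sumS_Sc)
qed (simp add: ggv_def)

end

lemma sum_delta_mult': "i < (N::nat) \<Longrightarrow> (\<Sum>j<N. (if i = j then 1 else 0) * f j) = (f i :: real)"
proof -
  assume "i < N"
  have "(\<Sum>j<N. (if i = j then 1 else 0) * f j) = (\<Sum>j<N. if j = i then f j else 0)"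
    by (rule sum.cong) auto
  thus ?thesis using \<open>i < N\<close> by (simp add: sum.delta)
qed
lemma tdiag_mat: assumes P: "P \<in> carrier_mat N a"
  shows "transpose_mat P * diag_mat N f = mat a N (\<lambda>(k,m). P $$ (m,k) * f m)"
proof (rule eq_matI)
  fix k m assume k: "k < dim_row (mat a N (\<lambda>(k,m). P $$ (m,k) * f m))" and m: "m < dim_col (mat a N (\<lambda>(k,m). P $$ (m,k) * f m))"
  hence km: "k < a" "m < N" by auto
  have "(transpose_mat P * diag_mat N f) $$ (k,m) = (\<Sum>j<N. (if j = m then 1 else 0) * (P $$ (j,k) * f j))"
    using km P by (auto simp: diag_mat_def scalar_prod_def lessThan_atLeast0 intro!: sum.cong)
  also have "\<dots> = P $$ (m,k) * f m" using km(2) by (rule sum_delta_mult)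
  finally show "(transpose_mat P * diag_mat N f) $$ (k,m) = mat a N (\<lambda>(k,m). P $$ (m,k) * f m) $$ (k,m)"
    using km by simp
qed (use P in \<open>auto simp: diag_mat_def\<close>)

lemma tdiag_entry: assumes P: "P \<in> carrier_mat N a" and Q: "Q \<in> carrier_mat N b" and k: "k < a" and l: "l < b"
  shows "(transpose_mat P * diag_mat N f * Q) $$ (k,l) = (\<Sum>m<N. P $$ (m,k) * f m * Q $$ (m,l))"
  unfolding tdiag_mat[OF P] using P Q k l by (simp add: scalar_prod_def lessThan_atLeast0)

lemma tdq_carrier: "P \<in> carrier_mat N a \<Longrightarrow> Q \<in> carrier_mat N b \<Longrightarrow> transpose_mat P * diag_mat N f * Q \<in> carrier_mat a b"
  by (rule mult_carrier_mat[OF mult_carrier_mat[OF transpose_carrier_mat[THEN iffD2] diag_mat_carrier]])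

context semF begin
lemma Sig_inj: assumes v: "v \<in> carrier_vec n" and z: "Sig *\<^sub>v v = 0\<^sub>v n" shows "v = 0\<^sub>v n"
proof -
  let ?t = "transpose_mat Lmat *\<^sub>v v"
  have Lt: "transpose_mat Lmat \<in> carrier_mat r n" using carriers(1) by (rule transpose_carrier_mat[THEN iffD2])
  have t: "?t \<in> carrier_vec r" by (rule mult_mat_vec_carrier[OF Lt v])
  have LLt: "Lmat * transpose_mat Lmat \<in> carrier_mat n n" by (rule mult_carrier_mat[OF carriers(1) Lt])
  have "Sig *\<^sub>v v = (Lmat * transpose_mat Lmat) *\<^sub>v v + Dmat *\<^sub>v v"
    unfolding Sig_def by (rule add_mult_distrib_mat_vec[OF LLt carriers(2) v])
  also have "(Lmat * transpose_mat Lmat) *\<^sub>v v = Lmat *\<^sub>v ?t"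
    by (rule assoc_mult_mat_vec[OF carriers(1) Lt v])
  finally have "Sig *\<^sub>v v = Lmat *\<^sub>v ?t + Dmat *\<^sub>v v" .
  moreover have "Lmat *\<^sub>v ?t \<in> carrier_vec n" by (rule mult_mat_vec_carrier[OF carriers(1) t])
  moreover have "Dmat *\<^sub>v v \<in> carrier_vec n" by (rule mult_mat_vec_carrier[OF carriers(2) v])
  ultimately have "v \<bullet> (Sig *\<^sub>v v) = v \<bullet> (Lmat *\<^sub>v ?t) + v \<bullet> (Dmat *\<^sub>v v)"
    using scalar_prod_add_distrib[OF v] by simp
  also have "v \<bullet> (Lmat *\<^sub>v ?t) = ?t \<bullet> ?t"
    using transpose_vec_mult_scalar[of Lmat n r ?t v] v t by simp
  also have "v \<bullet> (Dmat *\<^sub>v v) = (\<Sum>i<n. Dd i * (v $ i * v $ i))"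
    unfolding Dmat_def using diag_quad[OF v] .
  finally have e: "0 = ?t \<bullet> ?t + (\<Sum>i<n. Dd i * (v $ i * v $ i))" using z v by simp
  have "0 \<le> ?t \<bullet> ?t" using self_nonneg[OF t] .
  moreover have "0 \<le> (\<Sum>i<n. Dd i * (v $ i * v $ i))" using wsum_nonneg Dd_pos less_imp_le by blast
  ultimately have "(\<Sum>i<n. Dd i * (v $ i * v $ i)) = 0" using e by linarith
  thus ?thesis using wsum_zero[of v n Dd] v Dd_pos by blast
qed

lemma Sig_inv: "inv_mat Sig \<in> carrier_mat n n" "Sig * inv_mat Sig = 1\<^sub>m n" "inv_mat Sig * Sig = 1\<^sub>m n"
  using inv_mat_exists[OF carriers(4) Sig_inj] by auto

definition "Kd = 1\<^sub>m r + transpose_mat Lmat * Dinv * Lmat"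

lemma Kd_carrier[simp]: "Kd \<in> carrier_mat r r" unfolding Kd_def carrier_mat_def by simp

lemma Kd_inj: assumes v: "v \<in> carrier_vec r" and z: "Kd *\<^sub>v v = 0\<^sub>v r" shows "v = 0\<^sub>v r"
proof -
  let ?t = "Lmat *\<^sub>v v"
  have t: "?t \<in> carrier_vec n" by (rule mult_mat_vec_carrier[OF carriers(1) v])
  have Lt: "transpose_mat Lmat \<in> carrier_mat r n" using carriers(1) by (rule transpose_carrier_mat[THEN iffD2])
  have LD: "transpose_mat Lmat * Dinv \<in> carrier_mat r n" by (rule mult_carrier_mat[OF Lt carriers(3)])
  have LDL: "transpose_mat Lmat * Dinv * Lmat \<in> carrier_mat r r" by (rule mult_carrier_mat[OF LD carriers(1)])
  have Dt: "Dinv *\<^sub>v ?t \<in> carrier_vec n" by (rule mult_mat_vec_carrier[OF carriers(3) t])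
  have "Kd *\<^sub>v v = 1\<^sub>m r *\<^sub>v v + (transpose_mat Lmat * Dinv * Lmat) *\<^sub>v v"
    unfolding Kd_def by (rule add_mult_distrib_mat_vec[OF one_carrier_mat LDL v])
  also have "1\<^sub>m r *\<^sub>v v = v" using v by simp
  also have "(transpose_mat Lmat * Dinv * Lmat) *\<^sub>v v = transpose_mat Lmat *\<^sub>v (Dinv *\<^sub>v ?t)"
    using assoc_mult_mat_vec[OF LD carriers(1) v] assoc_mult_mat_vec[OF Lt carriers(3) t] by simp
  finally have "Kd *\<^sub>v v = v + transpose_mat Lmat *\<^sub>v (Dinv *\<^sub>v ?t)" .
  moreover have "transpose_mat Lmat *\<^sub>v (Dinv *\<^sub>v ?t) \<in> carrier_vec r"
    by (rule mult_mat_vec_carrier[OF Lt Dt])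
  ultimately have "v \<bullet> (Kd *\<^sub>v v) = v \<bullet> v + v \<bullet> (transpose_mat Lmat *\<^sub>v (Dinv *\<^sub>v ?t))"
    using scalar_prod_add_distrib[OF v v] by simp
  also have "v \<bullet> (transpose_mat Lmat *\<^sub>v (Dinv *\<^sub>v ?t)) = ?t \<bullet> (Dinv *\<^sub>v ?t)"
  proof -
    have a: "transpose_mat Lmat *\<^sub>v (Dinv *\<^sub>v ?t) \<in> carrier_vec r" by (rule mult_mat_vec_carrier[OF Lt Dt])
    have "v \<bullet> (transpose_mat Lmat *\<^sub>v (Dinv *\<^sub>v ?t)) = (transpose_mat Lmat *\<^sub>v (Dinv *\<^sub>v ?t)) \<bullet> v"
      by (rule comm_scalar_prod[OF v a])
    also have "\<dots> = (Dinv *\<^sub>v ?t) \<bullet> ?t"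
      by (rule transpose_vec_mult_scalar[OF carriers(1) v Dt])
    also have "\<dots> = ?t \<bullet> (Dinv *\<^sub>v ?t)" by (rule comm_scalar_prod[OF Dt t])
    finally show ?thesis .
  qed
  also have "?t \<bullet> (Dinv *\<^sub>v ?t) = (\<Sum>i<n. (1 / Dd i) * (?t $ i * ?t $ i))"
    unfolding Dinv_def using diag_quad[OF t] .
  finally have e: "0 = v \<bullet> v + (\<Sum>i<n. (1 / Dd i) * (?t $ i * ?t $ i))" using z v by simp
  have "0 \<le> (\<Sum>i<n. (1 / Dd i) * (?t $ i * ?t $ i))"
    by (rule wsum_nonneg) (use Dd_pos less_imp_le in auto)
  moreover have "v \<bullet> v = (\<Sum>i<r. 1 * (v $ i * v $ i))" using self_quad[OF v] .
  ultimately have "(\<Sum>i<r. 1 * (v $ i * v $ i)) = 0" using e self_nonneg[OF v] by linarith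
  thus ?thesis using wsum_zero[OF v, of "\<lambda>_. 1"] by simp
qed

lemma Kd_inv: "inv_mat Kd \<in> carrier_mat r r" "Kd * inv_mat Kd = 1\<^sub>m r" "inv_mat Kd * Kd = 1\<^sub>m r"
  using inv_mat_exists[OF Kd_carrier Kd_inj] by auto

definition "zv = inv_mat Kd *\<^sub>v hv"
definition "uv = w0v + Dinv *\<^sub>v (Lmat *\<^sub>v zv)"

lemma zv_carrier[simp]: "zv \<in> carrier_vec r"
  unfolding zv_def by (rule mult_mat_vec_carrier[OF Kd_inv(1) carriers(7)])

lemma Kz: "Kd *\<^sub>v zv = hv"
proof -
  have "Kd *\<^sub>v zv = (Kd * inv_mat Kd) *\<^sub>v hv"
    unfolding zv_def by (rule assoc_mult_mat_vec[OF Kd_carrier Kd_inv(1) carriers(7), symmetric])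
  also have "\<dots> = hv" unfolding Kd_inv(2) using carriers(7) by simp
  finally show ?thesis .
qed

lemma DDinv: "Dmat * Dinv = 1\<^sub>m n"
  unfolding Dmat_def Dinv_def diag_mult_diag using Dd_pos
  by (intro diag_one) (metis divide_self_if less_numeral_extra(3) times_divide_eq_right mult_1_right)

lemma Sig_u: "Sig *\<^sub>v uv = Lmat *\<^sub>v ggv + Dmat *\<^sub>v w0v"
proof -
  let ?x = "Lmat *\<^sub>v zv" and ?t0 = "transpose_mat Lmat *\<^sub>v w0v"
  let ?y = "Dinv *\<^sub>v ?x"
  have Lt: "transpose_mat Lmat \<in> carrier_mat r n" using carriers(1) by (rule transpose_carrier_mat[THEN iffD2])
  have LLt: "Lmat * transpose_mat Lmat \<in> carrier_mat n n" by (rule mult_carrier_mat[OF carriers(1) Lt])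
  have LD: "transpose_mat Lmat * Dinv \<in> carrier_mat r n" by (rule mult_carrier_mat[OF Lt carriers(3)])
  have LDL: "transpose_mat Lmat * Dinv * Lmat \<in> carrier_mat r r" by (rule mult_carrier_mat[OF LD carriers(1)])
  have x: "?x \<in> carrier_vec n" by (rule mult_mat_vec_carrier[OF carriers(1) zv_carrier])
  have y: "?y \<in> carrier_vec n" by (rule mult_mat_vec_carrier[OF carriers(3) x])
  have Sv: "Sig *\<^sub>v v = Lmat *\<^sub>v (transpose_mat Lmat *\<^sub>v v) + Dmat *\<^sub>v v" if v: "v \<in> carrier_vec n" for v
  proof -
    have "Sig *\<^sub>v v = (Lmat * transpose_mat Lmat) *\<^sub>v v + Dmat *\<^sub>v v"
      unfolding Sig_def by (rule add_mult_distrib_mat_vec[OF LLt carriers(2) v])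
    also have "(Lmat * transpose_mat Lmat) *\<^sub>v v = Lmat *\<^sub>v (transpose_mat Lmat *\<^sub>v v)"
      by (rule assoc_mult_mat_vec[OF carriers(1) Lt v])
    finally show ?thesis .
  qed
  have Dy: "Dmat *\<^sub>v ?y = ?x"
    using assoc_mult_mat_vec[OF carriers(2) carriers(3) x, symmetric] x by (simp add: DDinv)
  have Lty: "transpose_mat Lmat *\<^sub>v ?y = (transpose_mat Lmat * Dinv * Lmat) *\<^sub>v zv"
    using assoc_mult_mat_vec[OF LD carriers(1) zv_carrier] assoc_mult_mat_vec[OF Lt carriers(3) x] by simp
  have Kz2: "Kd *\<^sub>v zv = zv + (transpose_mat Lmat * Dinv * Lmat) *\<^sub>v zv"
    unfolding Kd_def using add_mult_distrib_mat_vec[OF one_carrier_mat LDL zv_carrier] by simp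
  have ty: "transpose_mat Lmat *\<^sub>v ?y \<in> carrier_vec r" by (rule mult_mat_vec_carrier[OF Lt y])
  have "Sig *\<^sub>v ?y = Lmat *\<^sub>v (transpose_mat Lmat *\<^sub>v ?y) + Lmat *\<^sub>v zv"
    using Sv[OF y] Dy by simp
  also have "\<dots> = Lmat *\<^sub>v (transpose_mat Lmat *\<^sub>v ?y + zv)"
    by (rule mult_add_distrib_mat_vec[OF carriers(1) ty zv_carrier, symmetric])
  also have "transpose_mat Lmat *\<^sub>v ?y + zv = hv"
    unfolding Kz[symmetric] Kz2 Lty using zv_carrier LDL by (simp add: comm_add_vec[of _ r])
  finally have Sy: "Sig *\<^sub>v ?y = Lmat *\<^sub>v hv" .
  have "Sig *\<^sub>v uv = Sig *\<^sub>v w0v + Sig *\<^sub>v ?y"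
    unfolding uv_def by (rule mult_add_distrib_mat_vec[OF carriers(4) carriers(5) y])
  also have "\<dots> = Lmat *\<^sub>v ?t0 + Dmat *\<^sub>v w0v + Lmat *\<^sub>v hv" unfolding Sy Sv[OF carriers(5)] ..
  also have "Lmat *\<^sub>v ggv = Lmat *\<^sub>v ?t0 + Lmat *\<^sub>v hv"
    unfolding gg_split by (rule mult_add_distrib_mat_vec[OF carriers(1) _ carriers(7)]) (rule mult_mat_vec_carrier[OF Lt carriers(5)])
  ultimately show ?thesis
    by (intro eq_vecI) (simp_all)
qed

lemma beta_hat_eq: "beta_hat M d S X W Y = vec d (\<lambda>i. \<beta> $ i + (Lmat *\<^sub>v zv) $ i / Dx $$ (i,i))"
proof -
  let ?E = "mat d n (\<lambda>(i,j). if i = j then 1 else (0::real))"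
  have E: "?E \<in> carrier_mat d n" by simp
  have u: "uv \<in> carrier_vec n" unfolding uv_def
    using mult_mat_vec_carrier[OF carriers(3) mult_mat_vec_carrier[OF carriers(1) zv_carrier]] by simp
  have "beta_hat M d S X W Y = ?E * inv_mat Sig *\<^sub>v (Sig *\<^sub>v uv)"
    unfolding beta_hat_def Let_def var_Sig cov_c Sig_u ..
  also have "\<dots> = ?E *\<^sub>v (inv_mat Sig *\<^sub>v (Sig *\<^sub>v uv))"
    by (rule assoc_mult_mat_vec[OF E Sig_inv(1) mult_mat_vec_carrier[OF carriers(4) u]])
  also have "inv_mat Sig *\<^sub>v (Sig *\<^sub>v uv) = uv"
    using assoc_mult_mat_vec[OF Sig_inv(1) carriers(4) u, symmetric] u by (simp add: Sig_inv(3))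
  also have "?E *\<^sub>v uv = vec d (\<lambda>i. \<beta> $ i + (Lmat *\<^sub>v zv) $ i / Dx $$ (i,i))"
  proof (rule eq_vecI)
    fix i assume "i < dim_vec (vec d (\<lambda>i. \<beta> $ i + (Lmat *\<^sub>v zv) $ i / Dx $$ (i,i)))"
    hence i: "i < d" by simp
    have "(?E *\<^sub>v uv) $ i = (\<Sum>m<n. (if i = m then 1 else 0) * uv $ m)"
      using i u by (simp add: scalar_prod_def lessThan_atLeast0)
    also have "\<dots> = uv $ i" using i by (intro sum_delta_mult') simp
    also have "\<dots> = \<beta> $ i + (Lmat *\<^sub>v zv) $ i / Dx $$ (i,i)"
      using i unfolding uv_def Dinv_def
      by (simp add: diag_mult_vec[OF mult_mat_vec_carrier[OF carriers(1) zv_carrier]] w0v_def w0_def Dd_def)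
    finally show "(?E *\<^sub>v uv) $ i = vec d (\<lambda>i. \<beta> $ i + (Lmat *\<^sub>v zv) $ i / Dx $$ (i,i)) $ i"
      using i by simp
  qed simp
  finally show ?thesis .
qed

lemma dimA: "dim_col A = r" "dim_row A = q" using carrier_matD[OF A] by simp_all
lemma dimB: "dim_row B = d" "dim_col B = r" using carrier_matD[OF B] by simp_all

lemma Dx_as_diag: "Dx = diag_mat d (\<lambda>i. Dx $$ (i,i))"
proof (rule eq_matI)
  fix i j assume "i < dim_row (diag_mat d (\<lambda>i. Dx $$ (i,i)))" "j < dim_col (diag_mat d (\<lambda>i. Dx $$ (i,i)))"
  hence ij: "i < d" "j < d" by (simp_all add: diag_mat_def)
  show "Dx $$ (i,j) = diag_mat d (\<lambda>i. Dx $$ (i,i)) $$ (i,j)"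
  proof (cases "i = j")
    case True thus ?thesis using ij by (simp add: diag_mat_def)
  next
    case False thus ?thesis using ij diagDx[OF ij False] by (simp add: diag_mat_def)
  qed
qed (use Dxc in \<open>simp_all add: diag_mat_def\<close>)

lemma invDx: "inv_mat Dx = diag_mat d (\<lambda>i. 1 / Dx $$ (i,i))"
proof -
  have nz: "\<And>i. i < d \<Longrightarrow> Dx $$ (i,i) \<noteq> 0" using Dx_diag_pos by (metis less_irrefl)
  have "inv_mat Dx = inv_mat (diag_mat d (\<lambda>i. Dx $$ (i,i)))" by (rule arg_cong[OF Dx_as_diag])
  also have "\<dots> = diag_mat d (\<lambda>i. 1 / Dx $$ (i,i))" by (rule inv_diag[OF nz])
  finally show ?thesis .
qed

definition "AS = submatrix A S UNIV"
definition "DS = mat s s (\<lambda>(i,j). if i = j then sw (pick S i) else 0)"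

lemma S_set: "{i. i < q \<and> i \<in> S} = S"
proof
  show "{i. i < q \<and> i \<in> S} \<subseteq> S" by blast
  show "S \<subseteq> {i. i < q \<and> i \<in> S}"
  proof
    fix x assume x: "x \<in> S"
    hence "x \<in> {0..<q}" using S by blast
    thus "x \<in> {i. i < q \<and> i \<in> S}" using x by simp
  qed
qed
lemma r_set: "card {j. j < r \<and> j \<in> (UNIV::nat set)} = r"
proof -
  have "{j. j < r \<and> j \<in> (UNIV::nat set)} = {..<r}" by blast
  thus ?thesis by (simp only: card_lessThan)
qed
lemma AS_carrier: "AS \<in> carrier_mat s r"
proof -
  have "dim_row AS = s" unfolding AS_def by (simp only: dim_submatrix dimA S_set)
  moreover have "dim_col AS = r" unfolding AS_def by (simp only: dim_submatrix dimA r_set)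
  ultimately show ?thesis by (rule carrier_matI)
qed

lemma AS_index: assumes m: "m < s" and k: "k < r" shows "AS $$ (m,k) = A $$ (pick S m, k)"
proof -
  have m': "m < card {i. i < dim_row A \<and> i \<in> S}" by (simp only: dimA S_set m)
  have k': "k < card {j. j < dim_col A \<and> j \<in> UNIV}" by (simp only: dimA r_set k)
  show ?thesis unfolding AS_def submatrix_index[OF m' k'] pick_UNIV ..
qed

lemma pickS_pos: assumes m: "m < s" shows "sw (pick S m) > 0"
proof -
  have "pick S m \<in> S" by (rule pick_in_set_le[OF m])
  hence "pick S m < q" using S by (meson atLeastLessThan_iff subsetD)
  thus ?thesis by (rule swpos)
qed

lemma invDS: "inv_mat DS = diag_mat s (\<lambda>i. 1 / sw (pick S i))"
proof -
  have "DS = diag_mat s (\<lambda>i. sw (pick S i))" unfolding DS_def diag_mat_def ..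
  moreover have nz: "\<And>i. i < s \<Longrightarrow> sw (pick S i) \<noteq> 0" using pickS_pos by (metis less_irrefl)
  ultimately show ?thesis using inv_diag[OF nz] by simp
qed

lemma Kdef_eq: "1\<^sub>m r + transpose_mat B * inv_mat Dx * B + transpose_mat AS * inv_mat DS * AS = Kd"
proof -
  have c1: "transpose_mat B * inv_mat Dx * B \<in> carrier_mat r r" unfolding invDx by (rule tdq_carrier[OF B B])
  have c2: "transpose_mat AS * inv_mat DS * AS \<in> carrier_mat r r" unfolding invDS by (rule tdq_carrier[OF AS_carrier AS_carrier])
  have c3: "transpose_mat Lmat * Dinv * Lmat \<in> carrier_mat r r" unfolding Dinv_def by (rule tdq_carrier[OF carriers(1) carriers(1)])
  show ?thesis
proof (rule eq_matI)
  fix k l assume "k < dim_row Kd" "l < dim_col Kd"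
  hence kl: "k < r" "l < r" using Kd_carrier by auto
  have e1: "(transpose_mat B * inv_mat Dx * B) $$ (k,l) = (\<Sum>m<d. B $$ (m,k) * (1 / Dx $$ (m,m)) * B $$ (m,l))"
    unfolding invDx by (rule tdiag_entry[OF B B kl])
  have e2: "(transpose_mat AS * inv_mat DS * AS) $$ (k,l) = (\<Sum>m<s. A $$ (pick S m,k) * (1 / sw (pick S m)) * A $$ (pick S m,l))"
    unfolding invDS using AS_index kl by (simp add: tdiag_entry[OF AS_carrier AS_carrier kl])
  have Dinv_eq: "Dinv = diag_mat n (\<lambda>m. 1 / Dd m)" unfolding Dinv_def ..
  have "(transpose_mat Lmat * Dinv * Lmat) $$ (k,l) = (\<Sum>m<n. Lmat $$ (m,k) * (1 / Dd m) * Lmat $$ (m,l))"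
    unfolding Dinv_eq by (rule tdiag_entry[OF carriers(1) carriers(1) kl])
  also have "\<dots> = (\<Sum>m<n. Lm m k * (1 / Dd m) * Lm m l)"
    by (intro sum.cong) (auto simp: Lmat_def kl)
  also have "\<dots> = (\<Sum>m<d. Lm m k * (1 / Dd m) * Lm m l) + (\<Sum>m<s. Lm (d+m) k * (1 / Dd (d+m)) * Lm (d+m) l)"
    by (rule sum_split_add)
  also have "\<dots> = (\<Sum>m<d. B $$ (m,k) * (1 / Dx $$ (m,m)) * B $$ (m,l)) + (\<Sum>m<s. A $$ (pick S m,k) * (1 / sw (pick S m)) * A $$ (pick S m,l))"
    by (simp add: Lm_def Dd_def pk_def)
  finally have e3': "(transpose_mat Lmat * Dinv * Lmat) $$ (k,l) = \<dots>" .
  have d1: "dim_row (transpose_mat B * inv_mat Dx * B) = r" "dim_col (transpose_mat B * inv_mat Dx * B) = r"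
    using c1 by auto
  have d2: "dim_row (transpose_mat AS * inv_mat DS * AS) = r" "dim_col (transpose_mat AS * inv_mat DS * AS) = r"
    using c2 by auto
  have d3: "dim_row (transpose_mat Lmat * Dinv * Lmat) = r" "dim_col (transpose_mat Lmat * Dinv * Lmat) = r"
    using c3 by auto
  have "(1\<^sub>m r + transpose_mat B * inv_mat Dx * B + transpose_mat AS * inv_mat DS * AS) $$ (k,l)
     = (1\<^sub>m r + transpose_mat B * inv_mat Dx * B) $$ (k,l) + (transpose_mat AS * inv_mat DS * AS) $$ (k,l)"
    by (rule index_add_mat(1)) (simp_all only: d2 kl)
  also have "(1\<^sub>m r + transpose_mat B * inv_mat Dx * B) $$ (k,l) = 1\<^sub>m r $$ (k,l) + (transpose_mat B * inv_mat Dx * B) $$ (k,l)"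
    by (rule index_add_mat(1)) (simp_all only: d1 kl)
  also have "Kd $$ (k,l) = 1\<^sub>m r $$ (k,l) + (transpose_mat Lmat * Dinv * Lmat) $$ (k,l)"
    unfolding Kd_def by (rule index_add_mat(1)) (simp_all only: d3 kl)
  ultimately show "(1\<^sub>m r + transpose_mat B * inv_mat Dx * B + transpose_mat AS * inv_mat DS * AS) $$ (k,l) = Kd $$ (k,l)"
    using e1 e2 e3' by simp
next
  show "dim_row (1\<^sub>m r + transpose_mat B * inv_mat Dx * B + transpose_mat AS * inv_mat DS * AS) = dim_row Kd"
    using c2 Kd_carrier by (simp only: index_add_mat(2) carrier_matD)
  show "dim_col (1\<^sub>m r + transpose_mat B * inv_mat Dx * B + transpose_mat AS * inv_mat DS * AS) = dim_col Kd"
    using c2 Kd_carrier by (simp only: index_add_mat(3) carrier_matD)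
qed
qed

end
context semF begin

definition "ASc = submatrix A Sc UNIV"
definition "gSc = vec (card Sc) (\<lambda>m. \<gamma> $ pick Sc m)"
definition "Gm = inv_mat Dx * B * inv_mat Kd * transpose_mat ASc"

lemma Sc_sub: "Sc \<subseteq> {0..<q}" unfolding Sc_def by blast
lemma finSc: "finite Sc" using Sc_sub finite_subset by blast

lemma Sc_set: "{i. i < q \<and> i \<in> Sc} = Sc"
proof
  show "{i. i < q \<and> i \<in> Sc} \<subseteq> Sc" by blast
  show "Sc \<subseteq> {i. i < q \<and> i \<in> Sc}"
  proof
    fix x assume x: "x \<in> Sc"
    hence "x \<in> {0..<q}" using Sc_sub by blast
    thus "x \<in> {i. i < q \<and> i \<in> Sc}" using x by simp
  qed
qed

lemma ASc_carrier: "ASc \<in> carrier_mat (card Sc) r"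
proof -
  have "dim_row ASc = card Sc" unfolding ASc_def by (simp only: dim_submatrix dimA Sc_set)
  moreover have "dim_col ASc = r" unfolding ASc_def by (simp only: dim_submatrix dimA r_set)
  ultimately show ?thesis by (rule carrier_matI)
qed

lemma ASc_index: assumes m: "m < card Sc" and k: "k < r" shows "ASc $$ (m,k) = A $$ (pick Sc m, k)"
proof -
  have m': "m < card {i. i < dim_row A \<and> i \<in> Sc}" by (simp only: dimA Sc_set m)
  have k': "k < card {j. j < dim_col A \<and> j \<in> UNIV}" by (simp only: dimA r_set k)
  show ?thesis unfolding ASc_def submatrix_index[OF m' k'] pick_UNIV ..
qed

lemma gSc_carrier: "gSc \<in> carrier_vec (card Sc)" unfolding gSc_def by simp

lemma C_unfold: "C_mat q sw Dx A B S = mat d q (\<lambda>(i,j). if j \<in> S then 0 else Gm $$ (i, card {a \<in> Sc. a < j}))"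
  unfolding C_mat_def Let_def dimA dimB Sc_def[symmetric] AS_def[symmetric] ASc_def[symmetric] DS_def[symmetric] Kdef_eq Gm_def ..

lemma hv_ASc: "hv = transpose_mat ASc *\<^sub>v gSc"
proof (rule eq_vecI)
  fix l assume "l < dim_vec (transpose_mat ASc *\<^sub>v gSc)"
  hence l: "l < r" using ASc_carrier by simp
  have "(transpose_mat ASc *\<^sub>v gSc) $ l = (\<Sum>m<card Sc. ASc $$ (m,l) * gSc $ m)"
    using l ASc_carrier gSc_carrier by (simp add: scalar_prod_def lessThan_atLeast0)
  also have "\<dots> = (\<Sum>m<card Sc. \<gamma> $ pick Sc m * A $$ (pick Sc m, l))"
    by (intro sum.cong refl) (simp add: ASc_index l gSc_def)
  also have "\<dots> = (\<Sum>j\<in>Sc. \<gamma> $ j * A $$ (j, l))" by (rule sum_pick[OF finSc])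
  finally show "hv $ l = (transpose_mat ASc *\<^sub>v gSc) $ l" using l by (simp add: hv_def)
qed (use ASc_carrier in simp)

lemma pos_pick: "m < card Sc \<Longrightarrow> card {a \<in> Sc. a < pick Sc m} = m"
  by (rule card_pick_le)

lemma pick_Sc: "m < card Sc \<Longrightarrow> pick Sc m \<in> Sc"
  by (rule pick_in_set_le)

lemma Gm_carrier: "Gm \<in> carrier_mat d (card Sc)"
proof -
  have "inv_mat Dx \<in> carrier_mat d d" unfolding invDx by (rule diag_mat_carrier)
  hence "inv_mat Dx * B * inv_mat Kd \<in> carrier_mat d r"
    using mult_carrier_mat[OF mult_carrier_mat[OF _ B] Kd_inv(1)] by blast
  moreover have "transpose_mat ASc \<in> carrier_mat r (card Sc)"
    using ASc_carrier by (rule transpose_carrier_mat[THEN iffD2])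
  ultimately show ?thesis unfolding Gm_def by (rule mult_carrier_mat)
qed

lemma Cg: "C_mat q sw Dx A B S *\<^sub>v \<gamma> = Gm *\<^sub>v gSc"
proof (rule eq_vecI)
  fix i assume "i < dim_vec (Gm *\<^sub>v gSc)"
  hence i: "i < d" using Gm_carrier by simp
  let ?f = "\<lambda>j. (if j \<in> S then 0 else Gm $$ (i, card {a \<in> Sc. a < j})) * \<gamma> $ j"
  have "(C_mat q sw Dx A B S *\<^sub>v \<gamma>) $ i = (\<Sum>j<q. ?f j)"
    unfolding C_unfold using i \<gamma> by (simp add: scalar_prod_def lessThan_atLeast0)
  also have "\<dots> = (\<Sum>j\<in>S. ?f j) + (\<Sum>j\<in>Sc. ?f j)" by (rule sumS_Sc)
  also have "(\<Sum>j\<in>S. ?f j) = 0" by (intro sum.neutral) simp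
  also have "(\<Sum>j\<in>Sc. ?f j) = (\<Sum>j\<in>Sc. Gm $$ (i, card {a \<in> Sc. a < j}) * \<gamma> $ j)"
    by (intro sum.cong refl) (simp add: Sc_def)
  also have "\<dots> = (\<Sum>m<card Sc. Gm $$ (i, card {a \<in> Sc. a < pick Sc m}) * \<gamma> $ pick Sc m)"
    by (rule sum_pick[OF finSc, symmetric])
  also have "\<dots> = (\<Sum>m<card Sc. Gm $$ (i, m) * gSc $ m)"
    by (intro sum.cong refl) (simp add: pos_pick gSc_def)
  also have "\<dots> = (Gm *\<^sub>v gSc) $ i"
    using i Gm_carrier gSc_carrier by (simp add: scalar_prod_def lessThan_atLeast0)
  finally show "(C_mat q sw Dx A B S *\<^sub>v \<gamma>) $ i = (Gm *\<^sub>v gSc) $ i" by simp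
qed (use Gm_carrier in \<open>simp add: C_unfold\<close>)

lemma Gm_g: "Gm *\<^sub>v gSc = inv_mat Dx *\<^sub>v (B *\<^sub>v zv)"
proof -
  have iD: "inv_mat Dx \<in> carrier_mat d d" unfolding invDx by (rule diag_mat_carrier)
  have DB: "inv_mat Dx * B \<in> carrier_mat d r" using mult_carrier_mat[OF iD B] .
  have DBK: "inv_mat Dx * B * inv_mat Kd \<in> carrier_mat d r" using mult_carrier_mat[OF DB Kd_inv(1)] .
  have At: "transpose_mat ASc \<in> carrier_mat r (card Sc)"
    using ASc_carrier by (rule transpose_carrier_mat[THEN iffD2])
  have "Gm *\<^sub>v gSc = (inv_mat Dx * B * inv_mat Kd) *\<^sub>v (transpose_mat ASc *\<^sub>v gSc)"
    unfolding Gm_def by (rule assoc_mult_mat_vec[OF DBK At gSc_carrier])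
  also have "\<dots> = (inv_mat Dx * B) *\<^sub>v zv"
    unfolding hv_ASc[symmetric] zv_def by (rule assoc_mult_mat_vec[OF DB Kd_inv(1) carriers(7)])
  also have "\<dots> = inv_mat Dx *\<^sub>v (B *\<^sub>v zv)"
    by (rule assoc_mult_mat_vec[OF iD B zv_carrier])
  finally show ?thesis .
qed

lemma final: "beta_hat M d S X W Y = \<beta> + C_mat q sw Dx A B S *\<^sub>v \<gamma>"
proof (rule eq_vecI)
  have cd: "C_mat q sw Dx A B S *\<^sub>v \<gamma> \<in> carrier_vec d"
    unfolding Cg using mult_mat_vec_carrier[OF Gm_carrier gSc_carrier] .
  fix i assume "i < dim_vec (\<beta> + C_mat q sw Dx A B S *\<^sub>v \<gamma>)"
  hence i: "i < d" using carrier_vecD[OF cd] by (simp only: index_add_vec(2))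
  have Bz: "B *\<^sub>v zv \<in> carrier_vec d" by (rule mult_mat_vec_carrier[OF B zv_carrier])
  have "(C_mat q sw Dx A B S *\<^sub>v \<gamma>) $ i = (1 / Dx $$ (i,i)) * (B *\<^sub>v zv) $ i"
    unfolding Cg Gm_g invDx diag_mult_vec[OF Bz] using i by simp
  also have "(B *\<^sub>v zv) $ i = (Lmat *\<^sub>v zv) $ i"
  proof -
    have "row Lmat i = row B i"
      by (rule eq_vecI) (use i B in \<open>simp_all add: Lmat_def Lm_def\<close>)
    thus ?thesis using i B by simp
  qed
  finally have c: "(C_mat q sw Dx A B S *\<^sub>v \<gamma>) $ i = (Lmat *\<^sub>v zv) $ i / Dx $$ (i,i)" by simp
  show "beta_hat M d S X W Y $ i = (\<beta> + C_mat q sw Dx A B S *\<^sub>v \<gamma>) $ i"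
  proof -
    have "(\<beta> + C_mat q sw Dx A B S *\<^sub>v \<gamma>) $ i = \<beta> $ i + (C_mat q sw Dx A B S *\<^sub>v \<gamma>) $ i"
      by (rule index_add_vec(1)) (use carrier_vecD[OF cd] i in simp)
    thus ?thesis unfolding beta_hat_eq c using i by simp
  qed
next
  have cd: "C_mat q sw Dx A B S *\<^sub>v \<gamma> \<in> carrier_vec d"
    unfolding Cg using mult_mat_vec_carrier[OF Gm_carrier gSc_carrier] .
  thus "dim_vec (beta_hat M d S X W Y) = dim_vec (\<beta> + C_mat q sw Dx A B S *\<^sub>v \<gamma>)"
    unfolding beta_hat_eq using carrier_vecD[OF cd] by (simp only: index_add_vec(2) dim_vec)
qed

end

theorem mainTheorem3:
  fixes M :: "'a measure"
    and d q r :: nat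
    and Nz Nw Nx :: "nat \<Rightarrow> 'a \<Rightarrow> real" and Ny :: "'a \<Rightarrow> real"
    and sw :: "nat \<Rightarrow> real" and Dx :: "real mat" and sy :: real
    and A B :: "real mat" and \<beta> \<gamma> :: "real vec" and S :: "nat set"
  assumes "prob_space M"
    and "d \<ge> 1" "q \<ge> 1" "r \<ge> 1"
    and A: "A \<in> carrier_mat q r" and B: "B \<in> carrier_mat d r"
    and \<beta>: "\<beta> \<in> carrier_vec d" and \<gamma>: "\<gamma> \<in> carrier_vec q"
    \<comment> \<open>mutual independence of N_z, N_w, N_x, N_y\<close>
    and indep: "prob_space.indep_vars M (\<lambda>k. PiM {..<block_dim r q d k} (\<lambda>_. borel))
                 (\<lambda>k \<omega>. restrict (\<lambda>i. noise_block Nz Nw Nx Ny k i \<omega>) {..<block_dim r q d k}) {0..<4}"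
    \<comment> \<open>each component is a square-integrable random variable\<close>
    and "\<And>i. i < r \<Longrightarrow> Nz i \<in> borel_measurable M \<and> integrable M (\<lambda>\<omega>. (Nz i \<omega>)\<^sup>2)"
    and "\<And>i. i < q \<Longrightarrow> Nw i \<in> borel_measurable M \<and> integrable M (\<lambda>\<omega>. (Nw i \<omega>)\<^sup>2)"
    and "\<And>i. i < d \<Longrightarrow> Nx i \<in> borel_measurable M \<and> integrable M (\<lambda>\<omega>. (Nx i \<omega>)\<^sup>2)"
    and "Ny \<in> borel_measurable M" "integrable M (\<lambda>\<omega>. (Ny \<omega>)\<^sup>2)"
    \<comment> \<open>zero means\<close>
    and "\<And>i. i < r \<Longrightarrow> (\<integral>\<omega>. Nz i \<omega> \<partial>M) = 0"
    and "\<And>i. i < q \<Longrightarrow> (\<integral>\<omega>. Nw i \<omega> \<partial>M) = 0"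
    and "\<And>i. i < d \<Longrightarrow> (\<integral>\<omega>. Nx i \<omega> \<partial>M) = 0"
    and "(\<integral>\<omega>. Ny \<omega> \<partial>M) = 0"
    \<comment> \<open>covariances\<close>
    and "\<And>i j. i < r \<Longrightarrow> j < r \<Longrightarrow> cov M (Nz i) (Nz j) = (if i = j then 1 else 0)"
    and "\<And>i. i < q \<Longrightarrow> sw i > 0"
    and "\<And>i j. i < q \<Longrightarrow> j < q \<Longrightarrow> cov M (Nw i) (Nw j) = (if i = j then sw i else 0)"
    and Dx: "Dx \<in> carrier_mat d d" "diagonal_mat Dx"
    and Dx_pd: "\<And>v. v \<in> carrier_vec d \<Longrightarrow> v \<noteq> 0\<^sub>v d \<Longrightarrow> v \<bullet> (Dx *\<^sub>v v) > 0"
    and "\<And>i j. i < d \<Longrightarrow> j < d \<Longrightarrow> cov M (Nx i) (Nx j) = Dx $$ (i, j)"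
    and "cov M Ny Ny = sy"
    and S: "S \<subseteq> {0..<q}"
  shows "beta_hat M d S (sem_X B Nz Nx) (sem_W A Nz Nw) (sem_Y A B \<beta> \<gamma> Nz Nw Nx Ny)
           = \<beta> + C_mat q sw Dx A B S *\<^sub>v \<gamma>"
proof -
  interpret semF M d q r Nz Nw Nx Ny sw Dx sy A B \<beta> \<gamma> S
    unfolding semF_def semF_axioms_def semP_def semP_axioms_def
    using assms by blast
  show ?thesis by (rule final)
qed

end
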